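(* Let $\mathbb{K}$ be a field and $f=a_0(x)+a_1(x)y+\cdots+a_n(x)y^n\in\mathbb{K}[x,y]$ with $n\geq 2$, $a_0,\ldots,a_n\in\mathbb{K}[x]$, $a_0a_n\neq 0$. Assume that $f$ has no nonconstant factor in $\mathbb{K}[x]$. If there exists an index $j$ with $0\leq j\leq n-1$ such that $$\deg a_j>\max_{i\neq j}\{\deg a_i+(j-i)\deg a_n\},$$ then $f$ is a product of at most $n-j$ irreducible polynomials over $\mathbb{K}[x]$. In particular, if $j=n-1$, then $f$ is irreducible over $\mathbb{K}[x]$.
   Context: $f$ is regarded as a polynomial in $y$ with coefficients in $\mathbb{K}[x]$; "a product of at most $k$ irreducible polynomials over $\mathbb{K}[x]$" means that in the factorization of $f$ into irreducible elements of $\mathbb{K}[x][y]$ the number of factors, counted with multiplicities, is at most $k$. *)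

theory Defs
  imports "HOL-Computational_Algebra.Polynomial_Factorial"
begin

end

theory Submission
  imports Defs
begin

definition wdeg :: "int \<Rightarrow> 'a::field poly poly \<Rightarrow> nat \<Rightarrow> int" where
  "wdeg t P i = int (degree (coeff P i)) + int i * t"

definition isL :: "int \<Rightarrow> 'a::field poly poly \<Rightarrow> nat \<Rightarrow> int \<Rightarrow> bool" where
  "isL t P l M \<longleftrightarrow> coeff P l \<noteq> 0 \<and> wdeg t P l = M \<and> (\<forall>i. coeff P i \<noteq> 0 \<longrightarrow> wdeg t P i \<le> M)
     \<and> (\<forall>i<l. coeff P i \<noteq> 0 \<longrightarrow> wdeg t P i < M)"

lemma isL_exists:
  fixes P :: "'a::field poly poly"
  assumes "P \<noteq> 0" shows "\<exists>l M. isL t P l M"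
proof -
  define S where "S = {wdeg t P i | i. i \<le> degree P \<and> coeff P i \<noteq> 0}"
  have fin: "finite S" unfolding S_def by simp
  have ne: "wdeg t P (degree P) \<in> S" using assms unfolding S_def by auto
  define M where "M = Max S"
  have le: "wdeg t P i \<le> M" if "coeff P i \<noteq> 0" for i
  proof -
    have "i \<le> degree P" using that le_degree by blast
    then have "wdeg t P i \<in> S" using that unfolding S_def by auto
    then show ?thesis unfolding M_def using fin by simp
  qed
  have "M \<in> S" unfolding M_def using fin ne by (intro Max_in) auto
  then obtain i0 where i0: "coeff P i0 \<noteq> 0" "wdeg t P i0 = M" unfolding S_def by auto
  define l where "l = (LEAST i. coeff P i \<noteq> 0 \<and> wdeg t P i = M)"
  have l: "coeff P l \<noteq> 0 \<and> wdeg t P l = M" unfolding l_def by (rule LeastI[of _ i0]) (use i0 in simp)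
  have "\<forall>i<l. coeff P i \<noteq> 0 \<longrightarrow> wdeg t P i < M"
  proof (intro allI impI)
    fix i assume "i < l" "coeff P i \<noteq> 0"
    then have "\<not> (coeff P i \<noteq> 0 \<and> wdeg t P i = M)" unfolding l_def using not_less_Least by blast
    with le[of i] \<open>coeff P i \<noteq> 0\<close> show "wdeg t P i < M" by auto
  qed
  then have "isL t P l M" unfolding isL_def using l le by auto
  then show ?thesis by blast
qed

lemma isL_unique:
  assumes "isL t P l M" "isL t P l' M'" shows "l = l' \<and> M = M'"
proof -
  have "M = M'" using assms unfolding isL_def by (metis order.antisym)
  moreover have "l = l'"
  proof (rule ccontr)
    assume "l \<noteq> l'"
    then have "l < l' \<or> l' < l" by auto
    then show False using assms \<open>M = M'\<close> unfolding isL_def by (metis less_irrefl)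
  qed
  ultimately show ?thesis by simp
qed

lemma sum_deg_bound:
  fixes f :: "nat \<Rightarrow> 'a::field poly"
  assumes "finite S" "\<And>i. i \<in> S \<Longrightarrow> f i \<noteq> 0 \<Longrightarrow> int (degree (f i)) \<le> B" "sum f S \<noteq> 0"
  shows "int (degree (sum f S)) \<le> B"
proof -
  obtain i where i: "i \<in> S" "f i \<noteq> 0" using assms(3) by (metis sum.neutral)
  then have "B \<ge> 0" using assms(2) by force
  have "degree (sum f S) \<le> nat B"
    using assms(1) proof (rule degree_sum_le)
    fix p assume "p \<in> S" then show "degree (f p) \<le> nat B"
      using assms(2)[of p] \<open>B \<ge> 0\<close> by (cases "f p = 0") auto
  qed
  then show ?thesis using \<open>B \<ge> 0\<close> by linarith
qed

lemma term_deg: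
  fixes a b :: "'a::field poly poly"
  assumes "coeff a i * coeff b (k - i) \<noteq> 0" "i \<le> k"
  shows "int (degree (coeff a i * coeff b (k - i))) + int k * t = wdeg t a i + wdeg t b (k - i)"
proof -
  have "coeff a i \<noteq> 0" "coeff b (k-i) \<noteq> 0" using assms by auto
  then have "degree (coeff a i * coeff b (k - i)) = degree (coeff a i) + degree (coeff b (k-i))"
    by (rule degree_mult_eq)
  moreover have "int k * t = int i * t + int (k - i) * t" using assms(2)
    by (simp add: of_nat_diff algebra_simps)
  ultimately show ?thesis unfolding wdeg_def by simp
qed

lemma isL_mult:
  fixes a b :: "'a::field poly poly"
  assumes A: "isL t a la Ma" and B: "isL t b lb Mb"
  shows "isL t (a * b) (la + lb) (Ma + Mb)"
proof -
  have Ale: "\<And>i. coeff a i \<noteq> 0 \<Longrightarrow> wdeg t a i \<le> Ma" and Alt: "\<And>i. i < la \<Longrightarrow> coeff a i \<noteq> 0 \<Longrightarrow> wdeg t a i < Ma"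
    and Ble: "\<And>i. coeff b i \<noteq> 0 \<Longrightarrow> wdeg t b i \<le> Mb" and Blt: "\<And>i. i < lb \<Longrightarrow> coeff b i \<noteq> 0 \<Longrightarrow> wdeg t b i < Mb"
    using A B unfolding isL_def by auto
  have a0: "coeff a la \<noteq> 0" "wdeg t a la = Ma" and b0: "coeff b lb \<noteq> 0" "wdeg t b lb = Mb"
    using A B unfolding isL_def by auto
  let ?T = "\<lambda>k i. coeff a i * coeff b (k - i)"
  have gen: "int (degree (?T k i)) \<le> Ma + Mb - int k * t" if "i \<le> k" "?T k i \<noteq> 0" for k i
  proof -
    have "coeff a i \<noteq> 0" "coeff b (k-i) \<noteq> 0" using that by auto
    then show ?thesis using term_deg[OF that(2,1), of t] Ale Ble by fastforce
  qed
  have strict: "int (degree (?T k i)) \<le> Ma + Mb - int k * t - 1"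
    if "i \<le> k" "?T k i \<noteq> 0" "i < la \<or> k - i < lb" for k i
  proof -
    have nz: "coeff a i \<noteq> 0" "coeff b (k-i) \<noteq> 0" using that by auto
    have "wdeg t a i + wdeg t b (k - i) < Ma + Mb"
      using that(3) Ale[OF nz(1)] Ble[OF nz(2)] Alt[OF _ nz(1)] Blt[OF _ nz(2)] by fastforce
    then show ?thesis using term_deg[OF that(2,1), of t] by linarith
  qed
  have cm: "coeff (a * b) k = (\<Sum>i\<le>k. ?T k i)" for k by (rule coeff_mult)
  have le: "wdeg t (a*b) k \<le> Ma + Mb" if "coeff (a*b) k \<noteq> 0" for k
  proof -
    have "int (degree (\<Sum>i\<le>k. ?T k i)) \<le> Ma + Mb - int k * t"
      using that unfolding cm by (intro sum_deg_bound) (auto intro: gen)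
    then show ?thesis unfolding wdeg_def cm by linarith
  qed
  have lt: "wdeg t (a*b) k < Ma + Mb" if "k < la + lb" "coeff (a*b) k \<noteq> 0" for k
  proof -
    have "int (degree (\<Sum>i\<le>k. ?T k i)) \<le> Ma + Mb - int k * t - 1"
      using that(2) unfolding cm
    proof (intro sum_deg_bound)
      fix i assume i: "i \<in> {..k}" "?T k i \<noteq> 0"
      have "i < la \<or> k - i < lb" using that(1) i(1) by auto
      then show "int (degree (?T k i)) \<le> Ma + Mb - int k * t - 1" using i by (intro strict) auto
    qed auto
    then show ?thesis unfolding wdeg_def cm by linarith
  qed
  define k where "k = la + lb"
  define D where "D = degree (coeff a la) + degree (coeff b lb)"
  have main_nz: "?T k la \<noteq> 0" using a0 b0 unfolding k_def by simp
  have main_deg: "degree (?T k la) = D" unfolding D_def k_def using a0 b0 by (simp add: degree_mult_eq)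
  have D: "int D + int k * t = Ma + Mb" using term_deg[OF main_nz, of t] main_deg unfolding k_def
    using a0 b0 by simp
  have split: "(\<Sum>i\<le>k. ?T k i) = ?T k la + (\<Sum>i\<in>{..k} - {la}. ?T k i)"
    by (rule sum.remove) (auto simp: k_def)
  define R where "R = (\<Sum>i\<in>{..k} - {la}. ?T k i)"
  have R: "R = 0 \<or> degree R < D"
  proof (cases "R = 0")
    case False
    have "int (degree R) \<le> Ma + Mb - int k * t - 1"
      unfolding R_def using False[unfolded R_def]
    proof (intro sum_deg_bound)
      fix i assume i: "i \<in> {..k} - {la}" "?T k i \<noteq> 0"
      then have "i < la \<or> k - i < lb" unfolding k_def by auto
      then show "int (degree (?T k i)) \<le> Ma + Mb - int k * t - 1" using i by (intro strict) auto
    qed auto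
    then show ?thesis using D by linarith
  qed simp
  have ck: "coeff (a*b) k = ?T k la + R" unfolding cm split R_def ..
  have "degree (coeff (a*b) k) = D"
    using R main_deg unfolding ck by (metis add.commute add.right_neutral degree_add_eq_right)
  moreover have "coeff (a*b) k \<noteq> 0"
  proof
    assume "coeff (a*b) k = 0"
    then have "R = - ?T k la" unfolding ck by (simp add: eq_neg_iff_add_eq_0 add.commute)
    then show False using R main_deg main_nz by auto
  qed
  moreover have "wdeg t (a*b) k = Ma + Mb" unfolding wdeg_def using D \<open>degree (coeff (a*b) k) = D\<close> by simp
  ultimately show ?thesis unfolding isL_def using le lt k_def by auto
qed


lemma isL_lt_degree:
  fixes g :: "'a::field poly poly"
  assumes "coeff g 0 \<noteq> 0" "degree (lead_coeff g) \<le> d" "degree g \<ge> 1"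
    and "isL (- int d) g l M"
  shows "l < degree g"
proof -
  have l: "coeff g l \<noteq> 0" "wdeg (- int d) g l = M" "\<And>i. i < l \<Longrightarrow> coeff g i \<noteq> 0 \<Longrightarrow> wdeg (- int d) g i < M"
    using assms(4) unfolding isL_def by auto
  have "l \<le> degree g" using l(1) le_degree by blast
  moreover have "l \<noteq> degree g"
  proof
    assume eq: "l = degree g"
    then have "wdeg (- int d) g 0 < M" using l(3)[of 0] assms(1,3) by auto
    moreover have "wdeg (- int d) g 0 \<ge> 0" unfolding wdeg_def by simp
    moreover have "int (degree g) * int d \<ge> int d" using assms(3)
      by (metis mult_1 mult_right_mono of_nat_0_le_iff of_nat_1 of_nat_le_iff)
    then have "M \<le> 0" using l(2) eq assms(2) unfolding wdeg_def by simp
    ultimately show False by simp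
  qed
  ultimately show ?thesis by simp
qed

theorem theorem7:
  fixes f :: "'a::field poly poly" and n j :: nat
  assumes "n = degree f" and "n \<ge> 2"
    and "coeff f 0 \<noteq> 0" and "coeff f n \<noteq> 0"
    and "\<And>g :: 'a poly. [:g:] dvd f \<Longrightarrow> degree g = 0"
    and "j \<le> n - 1" and "coeff f j \<noteq> 0"
    and "\<forall>i\<le>n. i \<noteq> j \<and> coeff f i \<noteq> 0 \<longrightarrow>
           int (degree (coeff f j)) > int (degree (coeff f i)) + (int j - int i) * int (degree (coeff f n))"
  shows "(\<exists>fs :: 'a poly poly list. length fs \<le> n - j \<and> (\<forall>g\<in>set fs. irreducible g) \<and> f = prod_list fs)
         \<and> (j = n - 1 \<longrightarrow> irreducible f)"
proof -
  define d where "d = degree (coeff f n)"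
  define t where "t = - int d"
  have f0: "f \<noteq> 0" using assms(3) by auto
  have lcf: "lead_coeff f = coeff f n" using assms(1) by simp
  have divp: "g \<noteq> 0 \<and> coeff g 0 \<noteq> 0 \<and> degree (lead_coeff g) \<le> d" if gd: "g dvd f" for g
  proof -
    obtain q where q: "f = g * q" using gd by (auto elim: dvdE)
    have "g \<noteq> 0" "q \<noteq> 0" using q f0 by auto
    moreover have "coeff f 0 = coeff g 0 * coeff q 0" unfolding q by (rule coeff_mult_0)
    moreover have "coeff f n = lead_coeff g * lead_coeff q" using lcf unfolding q lead_coeff_mult by simp
    moreover have "lead_coeff g \<noteq> 0" "lead_coeff q \<noteq> 0" using \<open>g \<noteq> 0\<close> \<open>q \<noteq> 0\<close> by auto
    ultimately show ?thesis using assms(3) unfolding d_def by (auto simp: degree_mult_eq)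
  qed
  have deg_pos: "degree g \<ge> 1" if "g dvd f" "\<not> is_unit g" for g
  proof (rule ccontr)
    assume "\<not> degree g \<ge> 1"
    then have dg: "degree g = 0" by simp
    then have gc: "g = [:coeff g 0:]" using degree_0_id by metis
    then have "[:coeff g 0:] dvd f" using that(1) by simp
    then have "degree (coeff g 0) = 0" by (rule assms(5))
    moreover have "coeff g 0 \<noteq> 0" using divp[OF that(1)] by simp
    ultimately have "is_unit (coeff g 0)" by (simp add: is_unit_iff_degree)
    then have "is_unit g" by (subst gc) (simp add: is_unit_const_poly_iff)
    then show False using that(2) by simp
  qed
  have main: "\<forall>g l M. degree g = m \<longrightarrow> g dvd f \<longrightarrow> degree g \<ge> 1 \<longrightarrow> isL t g l M \<longrightarrow>
     (\<exists>fs. length fs + l \<le> degree g \<and> (\<forall>h\<in>set fs. irreducible h) \<and> g = prod_list fs)" for m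
  proof (induction m rule: less_induct)
    case (less m)
    show ?case
    proof (intro allI impI)
      fix g l M assume g: "degree g = m" "g dvd f" "degree g \<ge> 1" "isL t g l M"
      have gp: "g \<noteq> 0" "coeff g 0 \<noteq> 0" "degree (lead_coeff g) \<le> d" using divp[OF g(2)] by auto
      have llt: "l < degree g" using isL_lt_degree[OF gp(2,3) g(3)] g(4) unfolding t_def by simp
      show "\<exists>fs. length fs + l \<le> degree g \<and> (\<forall>h\<in>set fs. irreducible h) \<and> g = prod_list fs"
      proof (cases "irreducible g")
        case True
        then show ?thesis using llt by (intro exI[of _ "[g]"]) auto
      next
        case False
        have nu: "\<not> is_unit g" using g(3) by (auto simp: is_unit_poly_iff)
        then obtain a b where ab: "g = a * b" "\<not> is_unit a" "\<not> is_unit b"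
          using False gp(1) unfolding irreducible_def by blast
        have adv: "a dvd f" "b dvd f" using g(2) ab(1) by (auto intro: dvd_trans)
        have a0: "a \<noteq> 0" "b \<noteq> 0" using ab gp(1) by auto
        have da: "degree a \<ge> 1" "degree b \<ge> 1" using deg_pos adv ab by auto
        have dg: "degree g = degree a + degree b" using ab(1) a0 by (simp add: degree_mult_eq)
        obtain la Ma where la: "isL t a la Ma" using isL_exists[OF a0(1)] by blast
        obtain lb Mb where lb: "isL t b lb Mb" using isL_exists[OF a0(2)] by blast
        have "isL t g (la + lb) (Ma + Mb)" using isL_mult[OF la lb] ab(1) by simp
        then have l: "l = la + lb" using isL_unique g(4) by blast
        have ma: "degree a < m" "degree b < m" using g(1) dg da by linarith+
        obtain fa where fa: "length fa + la \<le> degree a" "\<forall>h\<in>set fa. irreducible h" "a = prod_list fa"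
          using less.IH[OF ma(1), rule_format, OF refl adv(1) da(1) la] by blast
        obtain fb where fb: "length fb + lb \<le> degree b" "\<forall>h\<in>set fb. irreducible h" "b = prod_list fb"
          using less.IH[OF ma(2), rule_format, OF refl adv(2) da(2) lb] by blast
        show ?thesis
          using fa fb l dg ab(1) by (intro exI[of _ "fa @ fb"]) auto
      qed
    qed
  qed
  have Lf: "isL t f j (wdeg t f j)"
    unfolding isL_def
  proof (intro conjI allI impI)
    show "coeff f j \<noteq> 0" by (rule assms(7))
    show "wdeg t f j = wdeg t f j" ..
    have lt: "wdeg t f i < wdeg t f j" if "coeff f i \<noteq> 0" "i \<noteq> j" for i
    proof -
      have "i \<le> n" using that(1) le_degree assms(1) by blast
      then have "int (degree (coeff f j)) > int (degree (coeff f i)) + (int j - int i) * int d"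
        using assms(8) that unfolding d_def by blast
      then show ?thesis unfolding wdeg_def t_def by (simp add: algebra_simps)
    qed
    fix i
    show "coeff f i \<noteq> 0 \<Longrightarrow> wdeg t f i \<le> wdeg t f j" using lt by (cases "i = j") (auto intro: less_imp_le)
    show "i < j \<Longrightarrow> coeff f i \<noteq> 0 \<Longrightarrow> wdeg t f i < wdeg t f j" using lt by simp
  qed
  obtain fs where fs: "length fs + j \<le> n" "\<forall>h\<in>set fs. irreducible h" "f = prod_list fs"
    using main[of n, rule_format, OF assms(1)[symmetric] dvd_refl _ Lf] assms(1,2) by auto
  have part1: "\<exists>fs :: 'a poly poly list. length fs \<le> n - j \<and> (\<forall>g\<in>set fs. irreducible g) \<and> f = prod_list fs"
    using fs by (intro exI[of _ fs]) auto
  have part2: "irreducible f" if "j = n - 1"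
  proof -
    have "length fs \<le> 1" using fs(1) that assms(2) by simp
    then consider "fs = []" | h where "fs = [h]" by (cases fs) auto
    then show ?thesis
    proof cases
      case 1
      then have "f = 1" using fs(3) by simp
      then show ?thesis using assms(1,2) by simp
    next
      case 2
      then show ?thesis using fs by simp
    qed
  qed
  show ?thesis using part1 part2 by blast
qed

end
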